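(* Let $n\ge 3$ be odd. Then the row span $[C]$ of the cyclic matrix $C$ is the unique minimizer of $E$ on $Gr^{>0}(2,n)$.
   Context: For a real $2\times n$ matrix $X$ and $1\le i<j\le n$, $\Delta_{i,j}(X)$ is the determinant of the $2\times2$ submatrix of columns $i,j$. $Gr^{>0}(2,n)$ is the set of 2-dimensional subspaces of $\mathbb{R}^n$ having a spanning $2\times n$ matrix $X$ (rows spanning the subspace) with $\Delta_{i,j}(X)>0$ for all $i<j$; $E(x)=\max_{i<j}\Delta_{i,j}(X)/\min_{i<j}\Delta_{i,j}(X)$ (independent of the choice of $X$). The cyclic matrix $C$ is the $2\times n$ matrix whose $m$-th column is $(\cos((m-1)\pi/n),\sin((m-1)\pi/n))^T$, $m=1,\dots,n$. *)

theory Defs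
  imports Complex_Main
begin

text \<open>A real 2 x n matrix is represented by its columns: X m = (X_{1,m+1}, X_{2,m+1})
  for 0 <= m < n (0-based column index). Vectors of R^n are functions nat => real
  vanishing outside {0..<n}.\<close>

definition minor :: "(nat \<Rightarrow> real \<times> real) \<Rightarrow> nat \<Rightarrow> nat \<Rightarrow> real" where
  "minor X i j = fst (X i) * snd (X j) - snd (X i) * fst (X j)"

definition rowspan :: "nat \<Rightarrow> (nat \<Rightarrow> real \<times> real) \<Rightarrow> (nat \<Rightarrow> real) set" where
  "rowspan n X = {v. \<exists>a b. \<forall>m. v m = (if m < n then a * fst (X m) + b * snd (X m) else 0)}"

definition totally_positive :: "nat \<Rightarrow> (nat \<Rightarrow> real \<times> real) \<Rightarrow> bool" where
  "totally_positive n X \<longleftrightarrow> (\<forall>i j. i < j \<and> j < n \<longrightarrow> minor X i j > 0)"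

definition Gr_pos :: "nat \<Rightarrow> (nat \<Rightarrow> real) set set" where
  "Gr_pos n = {V. \<exists>X. rowspan n X = V \<and> totally_positive n X}"

definition minors_set :: "nat \<Rightarrow> (nat \<Rightarrow> real \<times> real) \<Rightarrow> real set" where
  "minors_set n X = {minor X i j | i j. i < j \<and> j < n}"

definition E :: "nat \<Rightarrow> (nat \<Rightarrow> real) set \<Rightarrow> real" where
  "E n V = (let X = (SOME X. rowspan n X = V \<and> totally_positive n X)
            in Max (minors_set n X) / Min (minors_set n X))"

definition cyclic :: "nat \<Rightarrow> nat \<Rightarrow> real \<times> real" where
  "cyclic n m = (cos (real m * pi / real n), sin (real m * pi / real n))"

end

theory Submission
  imports Defs
begin

lemma sum_shift_periodic:
  fixes F :: "nat \<Rightarrow> real"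
  assumes "\<And>a. F (a + n) = F a"
  shows "(\<Sum>a<n. F (a + j)) = (\<Sum>a<n. F a)"
proof (induction j)
  case 0 then show ?case by simp
next
  case (Suc j)
  have e1: "(\<Sum>a<Suc n. F (a + j)) = F (0+j) + (\<Sum>a<n. F (Suc a + j))" by (rule sum.lessThan_Suc_shift)
  have e2: "(\<Sum>a<Suc n. F (a + j)) = (\<Sum>a<n. F (a + j)) + F (n + j)" by (rule sum.lessThan_Suc)
  have "F (n+j) = F j" using assms[of j] by (simp add: add.commute)
  then show ?case using e1 e2 Suc by simp
qed

lemma aux_rot:
  fixes q s c1 s1 cy sy ct :: real
  assumes "s \<noteq> 0"
  shows "q * c1\<^sup>2 - 2 * cy * c1 / s + (q * s1\<^sup>2 - 2 * sy * s1 / s) - (q - 2 * ct / s)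
     = q * (s1\<^sup>2 + c1\<^sup>2 - 1) - 2 * (1 / s) * (cy * c1 + sy * s1 - ct)"
  using assms by (simp add: field_simps)

locale walk =
  fixes n :: nat and x y :: "nat \<Rightarrow> real"
  assumes n3: "3 \<le> n"
    and antix: "\<And>a. x (a + n) = - x a" and antiy: "\<And>a. y (a + n) = - y a"
    and pos: "\<And>a b. a < b \<Longrightarrow> b < a + n \<Longrightarrow> 0 < x a * y b - y a * x b"
begin

definition dt :: "nat \<Rightarrow> nat \<Rightarrow> real" where "dt a b = x a * y b - y a * x b"
definition sg :: "nat \<Rightarrow> real" where "sg a = dt a (Suc a)"
definition q :: "nat \<Rightarrow> real" where "q a = dt a (Suc (Suc a)) / (sg a * sg (Suc a))"
definition G :: "(nat \<Rightarrow> real) \<Rightarrow> real" where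
  "G f = (\<Sum>a<n. q a * (f (Suc a))^2 - 2 * f a * f (Suc a) / sg a)"

lemma dt_pos: "a < b \<Longrightarrow> b < a + n \<Longrightarrow> 0 < dt a b" using pos by (simp add: dt_def)
lemma sg_pos: "0 < sg a" unfolding sg_def using n3 by (intro dt_pos) auto
lemma antix': "x (n + a) = - x a" using antix[of a] by (simp add: add.commute)
lemma antiy': "y (n + a) = - y a" using antiy[of a] by (simp add: add.commute)
lemma dt_per: "dt (a + n) (b + n) = dt a b" unfolding dt_def antix antiy by simp
lemma dt_anti: "dt c (a + n) = - dt c a" unfolding dt_def antix antiy by simp
lemma sg_per: "sg (a + n) = sg a" unfolding sg_def using dt_per[of a "Suc a"] by simp

lemma cramer_id: "dt c a * sg (Suc a) + dt c (Suc (Suc a)) * sg a = dt c (Suc a) * dt a (Suc (Suc a))"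
  unfolding sg_def dt_def by algebra

lemma cramer: "dt c a / sg a + dt c (Suc (Suc a)) / sg (Suc a) = q a * dt c (Suc a)"
proof -
  have "sg a \<noteq> 0" "sg (Suc a) \<noteq> 0" using sg_pos[of a] sg_pos[of "Suc a"] by auto
  then show ?thesis unfolding q_def using cramer_id[of c a] by (simp add: field_simps)
qed

definition sol :: "(nat \<Rightarrow> real) \<Rightarrow> bool" where
  "sol h \<longleftrightarrow> (\<forall>a. h (a + n) = - h a) \<and> (\<forall>a. h a / sg a + h (Suc (Suc a)) / sg (Suc a) = q a * h (Suc a))"

lemma sol_dt: "sol (\<lambda>a. t * dt c a)"
  unfolding sol_def using cramer[of c] dt_anti[of c]
  by (auto simp: algebra_simps) (metis (no_types, lifting) cramer distrib_left mult.left_commute times_divide_eq_right)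

lemma T_zero:
  assumes he: "\<And>a. e (a+n) = - e a" and hs: "sol h"
  shows "(\<Sum>a<n. q a * e (Suc a) * h (Suc a) - e a * h (Suc a) / sg a - h a * e (Suc a) / sg a) = 0"
proof -
  have hh: "\<And>a. h (a+n) = - h a" and hr: "\<And>a. h a / sg a + h (Suc (Suc a)) / sg (Suc a) = q a * h (Suc a)"
    using hs unfolding sol_def by auto
  have per: "(\<Sum>a<n. e (a+1) * h (Suc (a+1)) / sg (a+1)) = (\<Sum>a<n. e a * h (Suc a) / sg a)"
    by (rule sum_shift_periodic) (simp add: he hh sg_per flip: add_Suc)
  have "(\<Sum>a<n. q a * e (Suc a) * h (Suc a) - e a * h (Suc a) / sg a - h a * e (Suc a) / sg a)
      = (\<Sum>a<n. q a * e (Suc a) * h (Suc a) - h a * e (Suc a) / sg a) - (\<Sum>a<n. e a * h (Suc a) / sg a)"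
    by (simp add: sum_subtractf)
  also have "... = (\<Sum>a<n. q a * e (Suc a) * h (Suc a) - h a * e (Suc a) / sg a) - (\<Sum>a<n. e (Suc a) * h (Suc (Suc a)) / sg (Suc a))"
    using per by simp
  also have "... = (\<Sum>a<n. e (Suc a) * (q a * h (Suc a) - h a / sg a - h (Suc (Suc a)) / sg (Suc a)))"
    by (simp add: sum_subtractf[symmetric] algebra_simps)
  also have "... = 0" using hr by (simp add: algebra_simps)
  finally show ?thesis .
qed

lemma G_decomp:
  assumes he: "\<And>a. e (a+n) = - e a" and hs: "sol h"
  shows "G (\<lambda>a. e a + h a) = G e"
proof -
  have hh: "\<And>a. h (a+n) = - h a" using hs unfolding sol_def by auto
  have T1: "(\<Sum>a<n. q a * e (Suc a) * h (Suc a) - e a * h (Suc a) / sg a - h a * e (Suc a) / sg a) = 0"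
    by (rule T_zero[where e=e and h=h, OF he hs])
  have T2: "(\<Sum>a<n. q a * h (Suc a) * h (Suc a) - h a * h (Suc a) / sg a - h a * h (Suc a) / sg a) = 0"
    by (rule T_zero[where e=h and h=h, OF hh hs])
  have "G (\<lambda>a. e a + h a) = (\<Sum>a<n. (q a * (e (Suc a))^2 - 2 * e a * e (Suc a) / sg a)
     + 2 * (q a * e (Suc a) * h (Suc a) - e a * h (Suc a) / sg a - h a * e (Suc a) / sg a)
     + (q a * h (Suc a) * h (Suc a) - h a * h (Suc a) / sg a - h a * h (Suc a) / sg a))"
    unfolding G_def by (intro sum.cong refl) (simp add: algebra_simps power2_eq_square diff_divide_distrib add_divide_distrib)
  also have "... = G e + 2 * (\<Sum>a<n. q a * e (Suc a) * h (Suc a) - e a * h (Suc a) / sg a - h a * e (Suc a) / sg a)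
     + (\<Sum>a<n. q a * h (Suc a) * h (Suc a) - h a * h (Suc a) / sg a - h a * h (Suc a) / sg a)"
    unfolding G_def by (simp add: sum.distrib sum_distrib_left)
  finally show ?thesis using T1 T2 by simp
qed

lemma G_zero0:
  assumes he: "\<And>a. e (a+n) = - e a" and e0: "e 0 = 0"
  shows "0 \<le> G e"
proof -
  define u where "u a = dt 0 a" for a
  have u0: "u 0 = 0" by (simp add: u_def dt_def)
  have un: "u n = 0" using dt_anti[of 0 0] u0 by (simp add: u_def)
  have upos: "\<And>a. 0 < a \<Longrightarrow> a < n \<Longrightarrow> 0 < u a" unfolding u_def by (rule dt_pos) auto
  have ur: "\<And>a. u a / sg a + u (Suc (Suc a)) / sg (Suc a) = q a * u (Suc a)" unfolding u_def by (rule cramer)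
  have en: "e n = 0" using he[of 0] e0 by simp
  define Phi where "Phi a = (if u a = 0 then 0 else (e a)^2 * u (Suc a) / (sg a * u a))" for a
  have step: "Phi (Suc a) - Phi a \<le> q a * (e (Suc a))^2 - 2 * e a * e (Suc a) / sg a" if a: "a < n" for a
  proof -
    consider "a = 0" | "Suc a = n" | "0 < a \<and> Suc a < n" using a by linarith
    then show ?thesis
    proof cases
      case 1
      have u1: "0 < u 1" using upos n3 by auto
      have s1: "0 < sg 1" by (rule sg_pos)
      have qq: "q 0 * u 1 = u 2 / sg 1" using ur[of 0] u0 by (simp add: numeral_2_eq_2)
      have "Phi (Suc a) - Phi a = (e 1)^2 * u 2 / (sg 1 * u 1)"
        using 1 u1 u0 by (simp add: Phi_def numeral_2_eq_2)
      also have "... = q 0 * (e 1)^2" using qq u1 s1 by (simp add: field_simps)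
      finally show ?thesis using 1 e0 by simp
    next
      case 2
      have "0 < u a" using upos 2 n3 by auto
      then have "Phi a = 0" using 2 un by (simp add: Phi_def)
      moreover have "Phi (Suc a) = 0" using 2 un by (simp add: Phi_def)
      ultimately show ?thesis using 2 en by simp
    next
      case 3
      have A: "0 < u a" using upos 3 by auto
      have B: "0 < u (Suc a)" using upos 3 by auto
      have s0: "0 < sg a" "0 < sg (Suc a)" by (rule sg_pos)+
      have qq: "q a = (u a / sg a + u (Suc (Suc a)) / sg (Suc a)) / u (Suc a)"
        using ur[of a] B by (simp add: field_simps)
      have "q a * (e (Suc a))^2 - 2 * e a * e (Suc a) / sg a - (Phi (Suc a) - Phi a)
          = (e (Suc a) * u a - e a * u (Suc a))^2 / (sg a * u a * u (Suc a))"
        unfolding qq Phi_def using A B s0 by (simp add: field_simps power2_eq_square)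
      moreover have "0 \<le> (e (Suc a) * u a - e a * u (Suc a))^2 / (sg a * u a * u (Suc a))"
        using A B s0 by simp
      ultimately show ?thesis by linarith
    qed
  qed
  have "(\<Sum>a<n. Phi (Suc a) - Phi a) \<le> G e" unfolding G_def by (rule sum_mono) (rule step, simp)
  moreover have "(\<Sum>a<n. Phi (Suc a) - Phi a) = Phi n - Phi 0" by (rule sum_lessThan_telescope)
  moreover have "Phi n = 0" "Phi 0 = 0" using un u0 by (simp_all add: Phi_def)
  ultimately show ?thesis by simp
qed

lemma G_nonneg:
  assumes hf: "\<And>a. f (a+n) = - f a"
  shows "0 \<le> G f"
proof -
  have "dt 1 0 = - sg 0" by (simp add: sg_def dt_def)
  then have d10: "dt 1 0 \<noteq> 0" using sg_pos[of 0] by simp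
  define t where "t = f 0 / dt 1 0"
  define h where "h a = t * dt 1 a" for a
  have hs: "sol h" unfolding h_def by (rule sol_dt)
  have hh: "\<And>a. h (a+n) = - h a" using hs unfolding sol_def by auto
  define e where "e a = f a - h a" for a
  have he: "\<And>a. e (a+n) = - e a" using hf hh by (simp add: e_def)
  have e0: "e 0 = 0" using d10 by (simp add: e_def h_def t_def)
  have "f = (\<lambda>a. e a + h a)" by (auto simp: e_def)
  then have "G f = G e" using G_decomp[where e=e and h=h, OF he hs] by simp
  then show ?thesis using G_zero0[OF he e0] by simp
qed

lemma rot: "2 * cos (pi / n) * (\<Sum>a<n. 1 / sg a) \<le> (\<Sum>a<n. q a)"
proof -
  define th where "th = pi / n"
  have npos: "0 < real n" using n3 by simp
  have nth: "real n * th = pi" using npos by (simp add: th_def)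
  have cper: "cos (real (a + n) * th) = - cos (real a * th)" for a
  proof -
    have "real (a + n) * th = real a * th + pi" using nth by (simp add: algebra_simps)
    then show ?thesis by (simp add: cos_periodic_pi)
  qed
  have sper: "sin (real (a + n) * th) = - sin (real a * th)" for a
  proof -
    have "real (a + n) * th = real a * th + pi" using nth by (simp add: algebra_simps)
    then show ?thesis by (simp add: sin_periodic_pi)
  qed
  have g1: "0 \<le> G (\<lambda>a. cos (real a * th))" by (rule G_nonneg) (rule cper)
  have g2: "0 \<le> G (\<lambda>a. sin (real a * th))" by (rule G_nonneg) (rule sper)
  have cd: "cos (real a * th) * cos (real (Suc a) * th) + sin (real a * th) * sin (real (Suc a) * th) = cos th" for a
  proof -
    have "cos (real (Suc a) * th - real a * th) = cos (real (Suc a) * th) * cos (real a * th) + sin (real (Suc a) * th) * sin (real a * th)"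
      by (rule cos_diff)
    moreover have "real (Suc a) * th - real a * th = th" by (simp add: algebra_simps)
    ultimately show ?thesis by (simp add: mult.commute)
  qed
  have "G (\<lambda>a. cos (real a * th)) + G (\<lambda>a. sin (real a * th)) = (\<Sum>a<n. q a - 2 * cos th / sg a)"
    unfolding G_def sum.distrib[symmetric]
  proof (intro sum.cong refl)
    fix a
    define X where "X = real (Suc a) * th"
    define Y where "Y = real a * th"
    have sg0: "sg a \<noteq> 0" using sg_pos[of a] by simp
    have "q a * (cos X)\<^sup>2 - 2 * cos Y * cos X / sg a + (q a * (sin X)\<^sup>2 - 2 * sin Y * sin X / sg a)
       - (q a - 2 * cos th / sg a)
      = q a * ((sin X)\<^sup>2 + (cos X)\<^sup>2 - 1) - 2 * (1 / sg a) * (cos Y * cos X + sin Y * sin X - cos th)"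
      using sg0 by (rule aux_rot)
    also have "... = 0" using cd[of a] by (simp add: X_def Y_def)
    finally show "q a * (cos (real (Suc a) * th))\<^sup>2 - 2 * cos (real a * th) * cos (real (Suc a) * th) / sg a +
      (q a * (sin (real (Suc a) * th))\<^sup>2 - 2 * sin (real a * th) * sin (real (Suc a) * th) / sg a)
      = q a - 2 * cos th / sg a" by (simp add: X_def Y_def)
  qed
  also have "... = (\<Sum>a<n. q a) - 2 * cos th * (\<Sum>a<n. 1 / sg a)"
    by (simp add: sum_subtractf sum_distrib_left)
  finally show ?thesis using g1 g2 by (simp add: th_def)
qed

end

lemma alg5:
  fixes a1 a2 b1 b2 c1 c2 p1 p2 r1 r2 :: real
  assumes "b1*p2 - b2*p1 = 1" "a1*p2 - a2*p1 = 1" "c1*r2 - c2*r1 = 1" "b1*r2 - b2*r1 = 1"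
  shows "a1*c2 - a2*c1 = (a1*b2-a2*b1) + (b1*c2-b2*c1) - (a1*b2-a2*b1)*(b1*c2-b2*c1)*(p1*r2-p2*r1)"
  using assms by algebra

lemma per_mult:
  fixes f :: "nat \<Rightarrow> 'b" and n b m :: nat
  assumes "\<And>a. f (a + n) = f a"
  shows "f (b + m * n) = f b"
proof (induction m)
  case 0 then show ?case by simp
next
  case (Suc m)
  have "f (b + Suc m * n) = f ((b + m * n) + n)" by (simp add: ac_simps)
  also have "... = f (b + m * n)" by (rule assms)
  finally show ?case using Suc by simp
qed

lemma per_mod:
  fixes f :: "nat \<Rightarrow> 'b" and n a :: nat
  assumes "\<And>a. f (a + n) = f a"
  shows "f a = f (a mod n)"
proof -
  have "a mod n + a div n * n = a" by simp
  then show ?thesis using per_mult[of f n "a mod n" "a div n", OF assms] by simp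
qed

locale owalk = walk +
  fixes k :: nat
  assumes nk: "n = 2*k+1" and k1: "1 \<le> k"
begin

definition L :: "nat \<Rightarrow> real" where "L a = dt a (a+k)"
lemma L_pos: "0 < L a" unfolding L_def using nk k1 by (intro dt_pos) auto
lemma L_per: "L (a+n) = L a" unfolding L_def using dt_per[of a "a+k"] by (simp add: add.commute add.left_commute)
lemma L_perm: "L (a + m*n) = L a"
  by (rule per_mult) (rule L_per)
lemma dt_swap: "dt b a = - dt a b" by (simp add: dt_def)
lemma L_k1: "dt a (a+k+1) = L (a+k+1)"
proof -
  have e: "a+k+1+k = a+n" using nk by simp
  have "L (a+k+1) = dt (a+k+1) (a+n)" by (simp only: L_def e)
  also have "... = dt a (a+k+1)" using dt_anti[of "a+k+1" a] dt_swap[of "a+k+1" a] by simp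
  finally show ?thesis by simp
qed

definition gg :: "nat \<Rightarrow> nat \<Rightarrow> real" where
  "gg j a = (if even j then L (a + j*k) else 1 / L (a + j*k))"
definition P :: "nat \<Rightarrow> real" where "P a = (\<Prod>j<n. gg j a)"
lemma gg_pos: "0 < gg j a" unfolding gg_def using L_pos by auto
lemma P_pos: "0 < P a" unfolding P_def using gg_pos by (simp add: prod_pos)
lemma P_per: "P (a+n) = P a"
proof -
  have "gg j (a+n) = gg j a" for j
  proof -
    show ?thesis using L_per[of "a + j*k"] by (simp add: gg_def ac_simps)
  qed
  then show ?thesis by (simp add: P_def)
qed
lemma P_mul: "P a * P (a+k) = (L a)^2"
proof -
  have n: "n = Suc (2*k)" using nk by simp
  have e1: "P a = gg 0 a * (\<Prod>j<2*k. gg (Suc j) a)"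
    unfolding P_def using n prod.lessThan_Suc_shift[of "\<lambda>j. gg j a" "2*k"] by simp
  have e2: "P (a+k) = (\<Prod>j<2*k. gg j (a+k)) * gg (2*k) (a+k)"
    unfolding P_def using n prod.lessThan_Suc[of "\<lambda>j. gg j (a+k)" "2*k"] by simp
  have one: "gg (Suc j) a * gg j (a+k) = 1" for j
  proof -
    have e: "a + Suc j * k = a + k + j * k" by simp
    show ?thesis unfolding gg_def e using L_pos[of "a + k + j*k"] by auto
  qed
  have "(\<Prod>j<2*k. gg (Suc j) a) * (\<Prod>j<2*k. gg j (a+k)) = (\<Prod>j<2*k. gg (Suc j) a * gg j (a+k))"
    by (simp add: prod.distrib)
  also have "... = 1" using one by simp
  finally have m: "(\<Prod>j<2*k. gg (Suc j) a) * (\<Prod>j<2*k. gg j (a+k)) = 1" .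
  have g0: "gg 0 a = L a" by (simp add: gg_def)
  have e: "a + k + 2 * k * k = a + k * n" using nk by (simp add: algebra_simps)
  have g2: "gg (2*k) (a+k) = L a" unfolding gg_def e using L_perm[of a k] by simp
  have "P a * P (a+k) = gg 0 a * gg (2*k) (a+k) * ((\<Prod>j<2*k. gg (Suc j) a) * (\<Prod>j<2*k. gg j (a+k)))"
    unfolding e1 e2 by (simp add: ac_simps)
  then show ?thesis using m g0 g2 by (simp add: power2_eq_square)
qed

definition lam :: "nat \<Rightarrow> real" where "lam a = sqrt (P a)"
lemma lam_pos: "0 < lam a" unfolding lam_def using P_pos by simp
lemma lam_per: "lam (a+n) = lam a" unfolding lam_def using P_per by simp
lemma lam_mul: "lam a * lam (a+k) = L a"
  unfolding lam_def using P_mul[of a] L_pos[of a] by (simp add: real_sqrt_mult[symmetric])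

lemma Ywalk: "walk n (\<lambda>a. x a / lam a) (\<lambda>a. y a / lam a)"
proof
  show "3 \<le> n" by (rule n3)
  show "x (a + n) / lam (a + n) = - (x a / lam a)" for a by (simp add: antix lam_per)
  show "y (a + n) / lam (a + n) = - (y a / lam a)" for a by (simp add: antiy lam_per)
  show "0 < x a / lam a * (y b / lam b) - y a / lam a * (x b / lam b)" if "a < b" "b < a + n" for a b
  proof -
    have "x a / lam a * (y b / lam b) - y a / lam a * (x b / lam b) = dt a b / (lam a * lam b)"
      by (simp add: dt_def diff_divide_distrib)
    then show ?thesis using dt_pos[OF that] lam_pos[of a] lam_pos[of b] by simp
  qed
qed

end

sublocale owalk \<subseteq> Y: walk n "\<lambda>a. x a / lam a" "\<lambda>a. y a / lam a" by (rule Ywalk)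

context owalk begin

lemma Ydt: "Y.dt a b = dt a b / (lam a * lam b)" by (simp add: Y.dt_def dt_def diff_divide_distrib)
lemma Ysg: "Y.sg a = sg a / (lam a * lam (Suc a))" by (simp add: Y.sg_def sg_def Ydt)
lemma Ydt_k: "Y.dt a (a+k) = 1" using lam_mul[of a] L_pos[of a] by (simp add: Ydt L_def)
lemma Ydt_k1: "Y.dt a (a+k+1) = 1"
proof -
  have e: "a+k+1+k = a+n" using nk by simp
  have "lam (a+k+1) * lam (a+k+1+k) = L (a+k+1)" by (rule lam_mul)
  then have "lam (a+k+1) * lam a = L (a+k+1)" unfolding e lam_per .
  then show ?thesis using L_k1[of a] L_pos[of "a+k+1"] by (simp add: Ydt mult.commute)
qed

lemma Yid: "Y.dt a (Suc (Suc a)) = Y.sg a + Y.sg (Suc a) - Y.sg a * Y.sg (Suc a) * Y.sg (a+k+1)"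
proof -
  let ?X = "\<lambda>a. x a / lam a" and ?Yy = "\<lambda>a. y a / lam a"
  have h1: "?X (Suc a) * ?Yy (a+k+1) - ?Yy (Suc a) * ?X (a+k+1) = 1"
    using Ydt_k[of "Suc a"] by (simp add: Y.dt_def)
  have h2: "?X a * ?Yy (a+k+1) - ?Yy a * ?X (a+k+1) = 1"
    using Ydt_k1[of a] by (simp add: Y.dt_def)
  have h3: "?X (Suc (Suc a)) * ?Yy (a+k+2) - ?Yy (Suc (Suc a)) * ?X (a+k+2) = 1"
    using Ydt_k[of "Suc (Suc a)"] by (simp add: Y.dt_def add.commute add.left_commute)
  have h4: "?X (Suc a) * ?Yy (a+k+2) - ?Yy (Suc a) * ?X (a+k+2) = 1"
    using Ydt_k1[of "Suc a"] by (simp add: Y.dt_def add.commute add.left_commute)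
  have "a + k + 2 = Suc (a+k+1)" by simp
  then show ?thesis
    unfolding Y.sg_def Y.dt_def using alg5[OF h1 h2 h3 h4] by simp
qed

lemma Yq: "Y.q a = 1 / Y.sg (Suc a) + 1 / Y.sg a - Y.sg (a+k+1)"
proof -
  have "Y.sg a \<noteq> 0" "Y.sg (Suc a) \<noteq> 0" using Y.sg_pos[of a] Y.sg_pos[of "Suc a"] by auto
  then show ?thesis unfolding Y.q_def Yid by (simp add: field_simps)
qed

lemma key: "(\<Sum>a<n. Y.sg a) \<le> (2 - 2 * cos (pi / n)) * (\<Sum>a<n. 1 / Y.sg a)"
proof -
  have r: "2 * cos (pi / n) * (\<Sum>a<n. 1 / Y.sg a) \<le> (\<Sum>a<n. Y.q a)" by (rule Y.rot)
  have s1: "(\<Sum>a<n. 1 / Y.sg (a + 1)) = (\<Sum>a<n. 1 / Y.sg a)"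
    by (rule sum_shift_periodic) (simp add: Y.sg_per)
  have s2: "(\<Sum>a<n. Y.sg (a + (k+1))) = (\<Sum>a<n. Y.sg a)"
    by (rule sum_shift_periodic) (simp add: Y.sg_per)
  have "(\<Sum>a<n. Y.q a) = (\<Sum>a<n. 1 / Y.sg (a+1)) + (\<Sum>a<n. 1 / Y.sg a) - (\<Sum>a<n. Y.sg (a + (k+1)))"
    unfolding Yq by (simp add: sum.distrib sum_subtractf add.assoc)
  then have "(\<Sum>a<n. Y.q a) = 2 * (\<Sum>a<n. 1 / Y.sg a) - (\<Sum>a<n. Y.sg a)" using s1 s2 by simp
  then show ?thesis using r by (simp add: algebra_simps)
qed

lemma cross: "Y.sg a * Y.sg (a+k) = sg a * sg (a+k) / (L a * L (Suc a))"
proof -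
  have "lam (Suc a) * lam (Suc a + k) = L (Suc a)" by (rule lam_mul)
  then show ?thesis using lam_mul[of a] unfolding Ysg by (simp add: field_simps)
qed

end


lemma (in walk) cramer_x: "sg (Suc a) * x a - dt a (Suc (Suc a)) * x (Suc a) + sg a * x (Suc (Suc a)) = 0"
  unfolding sg_def dt_def by algebra
lemma (in walk) cramer_y: "sg (Suc a) * y a - dt a (Suc (Suc a)) * y (Suc a) + sg a * y (Suc (Suc a)) = 0"
  unfolding sg_def dt_def by algebra

context owalk begin

lemma lowb:
  assumes m0: "0 < m" and hm: "\<And>a. m \<le> sg a" and hM: "\<And>a. L a \<le> M"
  shows "m^2 / M^2 \<le> Y.sg a * Y.sg (a+k)"
proof -
  have M0: "0 < M" using L_pos[of 0] hM[of 0] by linarith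
  have "m * m \<le> sg a * sg (a+k)"
    using mult_mono[OF hm[of a] hm[of "a+k"]] m0 sg_pos[of a] by simp
  moreover have "L a * L (Suc a) \<le> M * M"
    using mult_mono[OF hM[of a] hM[of "Suc a"]] M0 L_pos[of "Suc a"] by simp
  ultimately have "m^2 / M^2 \<le> sg a * sg (a+k) / (L a * L (Suc a))"
    using L_pos[of a] L_pos[of "Suc a"] sg_pos[of a] sg_pos[of "a+k"]
    by (intro frac_le) (auto simp: power2_eq_square)
  then show ?thesis using cross[of a] by simp
qed

lemma core_ineq:
  assumes m0: "0 < m" and hm: "\<And>a. m \<le> sg a" and hM: "\<And>a. L a \<le> M"
  shows "m^2 \<le> (2 - 2 * cos (pi / n)) * M^2"
proof -
  have M0: "0 < M" using L_pos[of 0] hM[of 0] by linarith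
  define r where "r = m^2 / M^2"
  have lb: "r / Y.sg a \<le> Y.sg (a+k)" for a
  proof -
    have "r \<le> Y.sg (a+k) * Y.sg a" using lowb[OF m0 hm hM, of a] unfolding r_def by (simp add: mult.commute)
    then show ?thesis using Y.sg_pos[of a] by (simp add: pos_divide_le_eq)
  qed
  have Spos: "0 < (\<Sum>a<n. 1 / Y.sg a)"
    using n3 Y.sg_pos by (intro sum_pos) (auto simp: lessThan_empty_iff)
  have "r * (\<Sum>a<n. 1 / Y.sg a) = (\<Sum>a<n. r / Y.sg a)" by (simp add: sum_distrib_left)
  also have "... \<le> (\<Sum>a<n. Y.sg (a+k))" by (rule sum_mono) (rule lb)
  also have "... = (\<Sum>a<n. Y.sg a)" by (rule sum_shift_periodic) (rule Y.sg_per)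
  also have "... \<le> (2 - 2 * cos (pi / n)) * (\<Sum>a<n. 1 / Y.sg a)" by (rule key)
  finally have "r \<le> 2 - 2 * cos (pi / n)" using Spos by simp
  then show ?thesis using M0 unfolding r_def by (simp add: field_simps)
qed

lemma core_eq:
  assumes m0: "0 < m" and hm: "\<And>a. m \<le> sg a" and hM: "\<And>a. L a \<le> M"
    and eq: "m^2 = (2 - 2 * cos (pi / n)) * M^2"
  shows "x (Suc (Suc a)) = 2 * cos (pi / n) * x (Suc a) - x a \<and>
         y (Suc (Suc a)) = 2 * cos (pi / n) * y (Suc a) - y a"
proof -
  have M0: "0 < M" using L_pos[of 0] hM[of 0] by linarith
  define c2 where "c2 = 2 - 2 * cos (pi / n)"
  define r where "r = m^2 / M^2"
  have rc: "r = c2" unfolding r_def c2_def using eq M0 by (simp add: field_simps)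
  define t where "t a = Y.sg (a+k) - r / Y.sg a" for a
  have tnn: "0 \<le> t a" for a
  proof -
    have "r \<le> Y.sg (a+k) * Y.sg a" using lowb[OF m0 hm hM, of a] unfolding r_def by (simp add: mult.commute)
    then have "r / Y.sg a \<le> Y.sg (a+k)" using Y.sg_pos[of a] by (simp add: pos_divide_le_eq)
    then show ?thesis unfolding t_def by simp
  qed
  have "(\<Sum>a<n. t a) = (\<Sum>a<n. Y.sg (a+k)) - r * (\<Sum>a<n. 1 / Y.sg a)"
    unfolding t_def by (simp add: sum_subtractf sum_distrib_left)
  also have "(\<Sum>a<n. Y.sg (a+k)) = (\<Sum>a<n. Y.sg a)" by (rule sum_shift_periodic) (rule Y.sg_per)
  finally have "(\<Sum>a<n. t a) \<le> 0" using key rc unfolding c2_def by simp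
  then have "(\<Sum>a<n. t a) = 0" using tnn by (meson order_antisym sum_nonneg)
  then have t0: "t a = 0" if "a < n" for a using tnn that by (simp add: sum_nonneg_eq_0_iff)
  have tper: "t (a + n) = t a" for a
  proof -
    have "Y.sg (a + n + k) = Y.sg (a + k)" using Y.sg_per[of "a+k"] by (simp add: ac_simps)
    then show ?thesis unfolding t_def by (simp add: Y.sg_per)
  qed
  have tz: "t a = 0" for a using per_mod[of t n a, OF tper] t0[of "a mod n"] n3 by simp
  have prod: "sg a * sg (a+k) = r * (L a * L (Suc a))" for a
  proof -
    have "Y.sg a * Y.sg (a+k) = r" using tz[of a] Y.sg_pos[of a] unfolding t_def by (simp add: field_simps)
    then show ?thesis using cross[of a] L_pos[of a] L_pos[of "Suc a"] by (simp add: field_simps)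
  qed
  have Seq: "sg b = m" for b
  proof -
    have "L b * L (Suc b) \<le> M * M"
      using mult_mono[OF hM[of b] hM[of "Suc b"]] M0 L_pos[of "Suc b"] by simp
    then have "m * m * (L b * L (Suc b)) \<le> m * m * (M * M)" by (simp add: mult_left_mono)
    moreover have "M * M * (sg b * sg (b+k)) = m * m * (L b * L (Suc b))"
      using prod[of b] M0 unfolding r_def by (simp add: field_simps power2_eq_square)
    ultimately have "M * M * (sg b * sg (b+k)) \<le> M * M * (m * m)" by (simp add: mult.commute)
    then have "sg b * sg (b+k) \<le> m * m" using M0 by simp
    moreover have "m \<le> sg (b+k)" by (rule hm)
    moreover have "m \<le> sg b" by (rule hm)
    ultimately show ?thesis
    proof (intro order_antisym)
      assume A: "sg b * sg (b+k) \<le> m * m" "m \<le> sg (b+k)" "m \<le> sg b"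
      show "sg b \<le> m"
      proof (rule ccontr)
        assume "\<not> sg b \<le> m"
        then have "m < sg b" by simp
        then have "m * sg (b+k) < sg b * sg (b+k)" using sg_pos[of "b+k"] by (rule mult_strict_right_mono)
        moreover have "m * m \<le> m * sg (b+k)" using A(2) m0 by (simp add: mult_left_mono)
        ultimately show False using A(1) by linarith
      qed
    qed (rule hm)
  qed
  have Leq: "L b = M" for b
  proof -
    have "m * m = (m^2/M^2) * (L b * L (Suc b))" using prod[of b] Seq unfolding r_def by simp
    then have "m * m * (M * M) = m * m * (L b * L (Suc b))" using M0 by (simp add: field_simps power2_eq_square)
    then have "M * M \<le> L b * L (Suc b)" using m0 by simp
    moreover have "L (Suc b) \<le> M" by (rule hM)
    moreover have "L b \<le> M" by (rule hM)
    ultimately show ?thesis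
    proof (intro order_antisym)
      assume A: "M * M \<le> L b * L (Suc b)" "L (Suc b) \<le> M" "L b \<le> M"
      show "M \<le> L b"
      proof (rule ccontr)
        assume "\<not> M \<le> L b"
        then have "L b < M" by simp
        then have "L b * L (Suc b) < M * L (Suc b)" using L_pos[of "Suc b"] by (rule mult_strict_right_mono)
        moreover have "M * L (Suc b) \<le> M * M" using A(2) M0 by (simp add: mult_left_mono)
        ultimately show False using A(1) by linarith
      qed
    qed (rule hM)
  qed
  have lamS: "lam (Suc b) = lam b" for b
  proof -
    have e: "Suc b + k + k = b + n" using nk by simp
    have "lam (Suc b) * lam (Suc b + k) = M" using lam_mul[of "Suc b"] Leq by simp
    moreover have "lam (Suc b + k) * lam (Suc b + k + k) = M" using lam_mul[of "Suc b + k"] Leq by simp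
    ultimately have "lam (Suc b) * lam (Suc b + k) = lam (Suc b + k + k) * lam (Suc b + k)" by (simp add: mult.commute)
    then have "lam (Suc b) = lam (Suc b + k + k)" using lam_pos[of "Suc b + k"] by simp
    then show ?thesis unfolding e lam_per .
  qed
  have lamc: "lam b = lam 0" for b by (induction b) (simp_all add: lamS)
  have l2: "lam 0 * lam 0 = M" using lam_mul[of 0] lamc[of k] Leq[of 0] by simp
  have Ysgc: "Y.sg b = m / M" for b using Ysg[of b] Seq[of b] lamc[of b] lamc[of "Suc b"] l2 by simp
  have "Y.dt a (Suc (Suc a)) = 2 * (m / M) - (m/M)^3" using Yid[of a] Ysgc by (simp add: power3_eq_cube)
  moreover have "dt a (Suc (Suc a)) = M * Y.dt a (Suc (Suc a))"
    using Ydt[of a "Suc (Suc a)"] lamc[of a] lamc[of "Suc (Suc a)"] l2 M0 by (simp add: field_simps)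
  ultimately have "dt a (Suc (Suc a)) = M * (2 * (m / M) - (m/M)^3)" by simp
  also have "... = m * (2 - r)" unfolding r_def using M0 by (simp add: field_simps power2_eq_square power3_eq_cube)
  also have "... = 2 * cos (pi / n) * m" unfolding rc c2_def by simp
  finally have d2: "dt a (Suc (Suc a)) = 2 * cos (pi / n) * m" .
  have "m * x a - 2 * cos (pi / n) * m * x (Suc a) + m * x (Suc (Suc a)) = 0"
    using cramer_x[of a] Seq d2 by simp
  moreover have "m * y a - 2 * cos (pi / n) * m * y (Suc a) + m * y (Suc (Suc a)) = 0"
    using cramer_y[of a] Seq d2 by simp
  ultimately have "m * (x (Suc (Suc a)) - (2 * cos (pi / n) * x (Suc a) - x a)) = 0"
    and "m * (y (Suc (Suc a)) - (2 * cos (pi / n) * y (Suc a) - y a)) = 0"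
    by (simp_all add: algebra_simps)
  then show ?thesis using m0 by simp
qed

end


context owalk begin
lemma core_form:
  assumes m0: "0 < m" and hm: "\<And>a. m \<le> sg a" and hM: "\<And>a. L a \<le> M"
    and eq: "m^2 = (2 - 2 * cos (pi / n)) * M^2"
  shows "\<exists>g11 g12 g21 g22. 0 < g11 * g22 - g12 * g21 \<and>
     (\<forall>a. x a = g11 * cos (real a * pi / n) + g12 * sin (real a * pi / n) \<and>
          y a = g21 * cos (real a * pi / n) + g22 * sin (real a * pi / n))"
proof -
  define th where "th = pi / n"
  have npos: "1 < real n" using n3 by simp
  have th0: "0 < th" unfolding th_def using npos by simp
  have thpi: "th < pi" unfolding th_def using npos by (simp add: divide_less_eq)
  have s0: "0 < sin th" using th0 thpi by (rule sin_gt_zero)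
  define c where "c = cos th"
  have rec: "x (Suc (Suc a)) = 2 * c * x (Suc a) - x a \<and> y (Suc (Suc a)) = 2 * c * y (Suc a) - y a" for a
    using core_eq[OF assms, of a] by (simp add: c_def th_def)
  have tc: "cos (real (Suc (Suc a)) * th) = 2 * c * cos (real (Suc a) * th) - cos (real a * th)"
   and ts: "sin (real (Suc (Suc a)) * th) = 2 * c * sin (real (Suc a) * th) - sin (real a * th)" for a
  proof -
    define u where "u = real (Suc a) * th"
    have e1: "real (Suc (Suc a)) * th = u + th" unfolding u_def by (simp add: algebra_simps)
    have e2: "real a * th = u - th" unfolding u_def by (simp add: algebra_simps)
    show "cos (real (Suc (Suc a)) * th) = 2 * c * cos (real (Suc a) * th) - cos (real a * th)"
      unfolding e1 e2 u_def[symmetric] c_def by (simp add: cos_add cos_diff)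
    show "sin (real (Suc (Suc a)) * th) = 2 * c * sin (real (Suc a) * th) - sin (real a * th)"
      unfolding e1 e2 u_def[symmetric] c_def by (simp add: sin_add sin_diff)
  qed
  define g11 where "g11 = x 0"
  define g21 where "g21 = y 0"
  define g12 where "g12 = (x 1 - c * x 0) / sin th"
  define g22 where "g22 = (y 1 - c * y 0) / sin th"
  define Q where "Q a \<longleftrightarrow> x a = g11 * cos (real a * th) + g12 * sin (real a * th) \<and>
          y a = g21 * cos (real a * th) + g22 * sin (real a * th)" for a
  have QQ: "Q a \<and> Q (Suc a)" for a
  proof (induction a)
    case 0
    have "Q 0" by (simp add: Q_def g11_def g21_def)
    moreover have "Q 1" using s0 by (simp add: Q_def g11_def g21_def g12_def g22_def c_def)
    ultimately show ?case by simp
  next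
    case (Suc a)
    then have A: "Q a" and B: "Q (Suc a)" by auto
    have A1: "x a = g11 * cos (real a * th) + g12 * sin (real a * th)"
      and A2: "y a = g21 * cos (real a * th) + g22 * sin (real a * th)" using A unfolding Q_def by auto
    have B1: "x (Suc a) = g11 * cos (real (Suc a) * th) + g12 * sin (real (Suc a) * th)"
      and B2: "y (Suc a) = g21 * cos (real (Suc a) * th) + g22 * sin (real (Suc a) * th)" using B unfolding Q_def by auto
    have "x (Suc (Suc a)) = 2 * c * x (Suc a) - x a" using rec[of a] by simp
    also have "... = g11 * (2 * c * cos (real (Suc a) * th) - cos (real a * th))
        + g12 * (2 * c * sin (real (Suc a) * th) - sin (real a * th))"
      unfolding A1 B1 by (simp add: algebra_simps)
    also have "... = g11 * cos (real (Suc (Suc a)) * th) + g12 * sin (real (Suc (Suc a)) * th)"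
      unfolding tc[of a] ts[of a] ..
    finally have C1: "x (Suc (Suc a)) = g11 * cos (real (Suc (Suc a)) * th) + g12 * sin (real (Suc (Suc a)) * th)" .
    have "y (Suc (Suc a)) = 2 * c * y (Suc a) - y a" using rec[of a] by simp
    also have "... = g21 * (2 * c * cos (real (Suc a) * th) - cos (real a * th))
        + g22 * (2 * c * sin (real (Suc a) * th) - sin (real a * th))"
      unfolding A2 B2 by (simp add: algebra_simps)
    also have "... = g21 * cos (real (Suc (Suc a)) * th) + g22 * sin (real (Suc (Suc a)) * th)"
      unfolding tc[of a] ts[of a] ..
    finally have C2: "y (Suc (Suc a)) = g21 * cos (real (Suc (Suc a)) * th) + g22 * sin (real (Suc (Suc a)) * th)" .
    have "Q (Suc (Suc a))" unfolding Q_def using C1 C2 by blast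
    then show ?case using B by simp
  qed
  have det: "g11 * g22 - g12 * g21 = sg 0 / sin th"
    using s0 by (simp add: g11_def g12_def g21_def g22_def sg_def dt_def field_simps)
  have "0 < g11 * g22 - g12 * g21" unfolding det using sg_pos[of 0] s0 by simp
  moreover have "\<forall>a. x a = g11 * cos (real a * pi / n) + g12 * sin (real a * pi / n) \<and>
          y a = g21 * cos (real a * pi / n) + g22 * sin (real a * pi / n)"
    using QQ unfolding Q_def th_def by simp
  ultimately show ?thesis by blast
qed
end




definition ratio :: "nat \<Rightarrow> (nat \<Rightarrow> real \<times> real) \<Rightarrow> real" where
  "ratio n X = Max (minors_set n X) / Min (minors_set n X)"

lemma ms_finite: "finite (minors_set n X)"
proof -
  have "minors_set n X \<subseteq> (\<lambda>p. minor X (fst p) (snd p)) ` ({..<n} \<times> {..<n})"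
    unfolding minors_set_def by force
  then show ?thesis by (rule finite_subset) simp
qed

lemma ms_ne: "2 \<le> n \<Longrightarrow> minors_set n X \<noteq> {}"
  unfolding minors_set_def by force

lemma ms_pos: "totally_positive n X \<Longrightarrow> t \<in> minors_set n X \<Longrightarrow> 0 < t"
  unfolding minors_set_def totally_positive_def by auto

lemma ratio_inv:
  assumes n2: "2 \<le> n" and R: "rowspan n X = rowspan n Y"
    and tX: "totally_positive n X" and tY: "totally_positive n Y"
  shows "ratio n X = ratio n Y"
proof -
  have "(\<lambda>m. if m < n then fst (X m) else 0) \<in> rowspan n X"
    unfolding rowspan_def by (rule CollectI, rule exI[where x=1], rule exI[where x=0]) simp
  then have "(\<lambda>m. if m < n then fst (X m) else 0) \<in> rowspan n Y" by (simp only: R)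
  then obtain a1 b1 where h1: "\<And>m. (if m < n then fst (X m) else 0) = (if m < n then a1 * fst (Y m) + b1 * snd (Y m) else 0)"
    unfolding rowspan_def by blast
  have "(\<lambda>m. if m < n then snd (X m) else 0) \<in> rowspan n X"
    unfolding rowspan_def by (rule CollectI, rule exI[where x=0], rule exI[where x=1]) simp
  then have "(\<lambda>m. if m < n then snd (X m) else 0) \<in> rowspan n Y" by (simp only: R)
  then obtain a2 b2 where h2: "\<And>m. (if m < n then snd (X m) else 0) = (if m < n then a2 * fst (Y m) + b2 * snd (Y m) else 0)"
    unfolding rowspan_def by blast
  define d where "d = a1 * b2 - b1 * a2"
  have mi: "minor X i j = d * minor Y i j" if "i < n" "j < n" for i j
  proof -
    have "fst (X i) = a1 * fst (Y i) + b1 * snd (Y i)" "snd (X i) = a2 * fst (Y i) + b2 * snd (Y i)"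
         "fst (X j) = a1 * fst (Y j) + b1 * snd (Y j)" "snd (X j) = a2 * fst (Y j) + b2 * snd (Y j)"
      using h1[of i] h2[of i] h1[of j] h2[of j] that by auto
    then show ?thesis unfolding minor_def d_def by (simp add: algebra_simps)
  qed
  have "0 < minor X 0 1" "0 < minor Y 0 1" using tX tY n2 unfolding totally_positive_def by auto
  then have d0: "0 < d" using mi[of 0 1] n2 by (simp add: zero_less_mult_iff)
  have img: "minors_set n X = (\<lambda>t. d * t) ` minors_set n Y"
  proof (rule set_eqI, rule iffI)
    fix t assume "t \<in> minors_set n X"
    then obtain i j where ij: "t = minor X i j" "i < j" "j < n" unfolding minors_set_def by blast
    then have "t = d * minor Y i j" using mi[of i j] by simp
    moreover have "minor Y i j \<in> minors_set n Y" unfolding minors_set_def using ij by blast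
    ultimately show "t \<in> (\<lambda>t. d * t) ` minors_set n Y" by blast
  next
    fix t assume "t \<in> (\<lambda>t. d * t) ` minors_set n Y"
    then obtain t' where t': "t = d * t'" "t' \<in> minors_set n Y" by blast
    then obtain i j where ij: "t' = minor Y i j" "i < j" "j < n" unfolding minors_set_def by blast
    then have "t = minor X i j" using mi[of i j] t' by simp
    then show "t \<in> minors_set n X" unfolding minors_set_def using ij by blast
  qed
  have mono: "mono (\<lambda>t. d * t)" using d0 by (auto intro: monoI mult_left_mono)
  have "Max (minors_set n X) = d * Max (minors_set n Y)"
    unfolding img using mono_Max_commute[OF mono ms_finite ms_ne[OF n2]] by simp
  moreover have "Min (minors_set n X) = d * Min (minors_set n Y)"
    unfolding img using mono_Min_commute[OF mono ms_finite ms_ne[OF n2]] by simp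
  ultimately show ?thesis unfolding ratio_def using d0 by simp
qed

lemma E_ratio:
  assumes n2: "2 \<le> n" and tX: "totally_positive n X"
  shows "E n (rowspan n X) = ratio n X"
proof -
  define X1 where "X1 = (SOME X1. rowspan n X1 = rowspan n X \<and> totally_positive n X1)"
  have "rowspan n X1 = rowspan n X \<and> totally_positive n X1"
    unfolding X1_def by (rule someI[of _ X]) (simp add: tX)
  then have "ratio n X1 = ratio n X" using ratio_inv[OF n2 _ _ tX] by blast
  then show ?thesis unfolding E_def X1_def[symmetric] ratio_def by (simp add: Let_def)
qed

lemma blocks:
  fixes a b n :: nat
  assumes "a < b" "b < a + n"
  shows "(b div n = a div n \<and> a mod n < b mod n) \<or> (b div n = Suc (a div n) \<and> b mod n < a mod n)"
proof -
  have n0: "0 < n" using assms by simp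
  have d1: "a div n \<le> b div n" using assms by (simp add: div_le_mono)
  have "b div n \<le> (a + n) div n" by (rule div_le_mono) (use assms in simp)
  moreover have "(a + n) div n = Suc (a div n)" using n0 by simp
  ultimately have d2: "b div n \<le> Suc (a div n)" by simp
  have ea: "a div n * n + a mod n = a" by simp
  have eb: "b div n * n + b mod n = b" by simp
  have ma: "a mod n < n" "b mod n < n" using n0 by simp_all
  consider "b div n = a div n" | "b div n = Suc (a div n)" using d1 d2 by linarith
  then show ?thesis
  proof cases
    case 1
    then have "b div n * n = a div n * n" by simp
    then show ?thesis using 1 ea eb assms by linarith
  next
    case 2
    then have "b div n * n = a div n * n + n" by simp
    then show ?thesis using 2 ea eb assms by linarith
  qed
qed



lemma minor_cyc:
  assumes "i \<le> j"
  shows "minor (cyclic n) i j = sin (real (j - i) * pi / n)"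
proof -
  have r: "real (j - i) = real j - real i" using assms by simp
  have "real (j - i) * pi / n = real j * pi / n - real i * pi / n"
    unfolding r by (simp add: left_diff_distrib diff_divide_distrib)
  then show ?thesis unfolding minor_def cyclic_def by (simp add: sin_diff mult.commute)
qed

lemma tp_cyclic: "totally_positive n (cyclic n)"
  unfolding totally_positive_def
proof (intro allI impI)
  fix i j assume ij: "i < j \<and> j < n"
  then have npos: "0 < real n" by simp
  have d1: "1 \<le> real (j - i)" and d2: "real (j - i) < real n" using ij by auto
  have "0 < real (j - i) * pi / n" using d1 npos by simp
  moreover have "real (j - i) * pi / n < pi" using d2 npos by (simp add: divide_less_eq)
  ultimately show "0 < minor (cyclic n) i j" unfolding minor_cyc[OF less_imp_le[OF conjunct1[OF ij]]]
    by (rule sin_gt_zero)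
qed

lemma sin_le_half:
  fixes t :: real
  assumes n: "0 < real n" and t0: "0 \<le> t" and t1: "2 * t \<le> real n - 1"
  shows "sin (t * pi / n) \<le> cos (pi / (2 * n))"
proof -
  have a: "t * pi / n \<le> pi / 2 - pi / (2 * n)"
  proof -
    have h: "t \<le> (real n - 1) / 2" using t1 by simp
    have "t * pi \<le> (real n - 1) / 2 * pi" using h by (rule mult_right_mono) simp
    then have "t * pi / n \<le> (real n - 1) / 2 * pi / n" by (rule divide_right_mono) (use n in simp)
    also have "... = pi / 2 - pi / (2 * n)" using n by (simp add: field_simps)
    finally show ?thesis .
  qed
  have b: "- (pi/2) \<le> t * pi / n" using t0 n by (simp add: order.trans[of _ 0])
  have c: "pi / 2 - pi / (2 * n) \<le> pi / 2" using n by simp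
  have "sin (t * pi / n) \<le> sin (pi / 2 - pi / (2 * n))" using b a c by (rule sin_monotone_2pi_le)
  also have "... = cos (pi / (2 * n))" by (simp add: sin_cos_eq)
  finally show ?thesis .
qed

lemma sin_ge_first:
  fixes t :: real
  assumes n: "0 < real n" and t0: "1 \<le> t" and t1: "2 * t \<le> real n"
  shows "sin (pi / n) \<le> sin (t * pi / n)"
proof -
  have "1 * pi \<le> t * pi" using t0 by (rule mult_right_mono) simp
  then have a: "pi / n \<le> t * pi / n" by (simp add: divide_right_mono)
  have c: "t * pi / n \<le> pi / 2"
  proof -
    have h: "t \<le> real n / 2" using t1 by simp
    have "t * pi \<le> real n / 2 * pi" using h by (rule mult_right_mono) simp
    then have "t * pi / n \<le> real n / 2 * pi / n" by (rule divide_right_mono) (use n in simp)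
    also have "... = pi / 2" using n by (simp add: field_simps)
    finally show ?thesis .
  qed
  have b: "- (pi/2) \<le> pi / n" using n by (simp add: order.trans[of _ 0])
  show ?thesis using b a c by (rule sin_monotone_2pi_le)
qed

lemma cyc_bounds:
  assumes odd: "odd n" and d1: "1 \<le> d" and d2: "d < n"
  shows "sin (real d * pi / n) \<le> cos (pi / (2 * n))" and "sin (pi / n) \<le> sin (real d * pi / n)"
proof -
  have n: "0 < real n" using d2 by simp
  have sym: "sin (real d * pi / n) = sin (real (n - d) * pi / n)"
  proof -
    have "real (n - d) * pi / n = pi - real d * pi / n" using d2 n by (simp add: of_nat_diff field_simps)
    then show ?thesis by simp
  qed
  have nd: "2 * d \<noteq> n" using odd by auto
  show "sin (real d * pi / n) \<le> cos (pi / (2 * n))"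
  proof (cases "2 * d < n")
    case True
    then have "2 * real d \<le> real n - 1" using nd by linarith
    then show ?thesis using sin_le_half[OF n] by simp
  next
    case False
    then have "2 * real (n - d) \<le> real n - 1" using nd d2 by (simp add: of_nat_diff)
    then show ?thesis unfolding sym using sin_le_half[OF n] by simp
  qed
  show "sin (pi / n) \<le> sin (real d * pi / n)"
  proof (cases "2 * d \<le> n")
    case True
    then have "2 * real d \<le> real n" by linarith
    then show ?thesis using sin_ge_first[OF n] d1 by simp
  next
    case False
    then have "2 * real (n - d) \<le> real n" "1 \<le> real (n - d)" using d2 by (simp_all add: of_nat_diff)
    then show ?thesis unfolding sym using sin_ge_first[OF n] by simp
  qed
qed

lemma rowspan_eq:
  assumes hx: "\<And>a. a < n \<Longrightarrow> fst (X a) = g11 * fst (C a) + g12 * snd (C a)"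
    and hy: "\<And>a. a < n \<Longrightarrow> snd (X a) = g21 * fst (C a) + g22 * snd (C a)"
    and det: "g11 * g22 - g12 * g21 \<noteq> 0"
  shows "rowspan n X = rowspan n C"
proof (rule set_eqI, rule iffI)
  fix v assume "v \<in> rowspan n X"
  then obtain a b where v: "\<And>m. v m = (if m < n then a * fst (X m) + b * snd (X m) else 0)"
    unfolding rowspan_def by blast
  have "\<And>m. v m = (if m < n then (a * g11 + b * g21) * fst (C m) + (a * g12 + b * g22) * snd (C m) else 0)"
    using v hx hy by (simp add: algebra_simps)
  then show "v \<in> rowspan n C" unfolding rowspan_def by blast
next
  fix v assume "v \<in> rowspan n C"
  then obtain a b where v: "\<And>m. v m = (if m < n then a * fst (C m) + b * snd (C m) else 0)"
    unfolding rowspan_def by blast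
  define dd where "dd = g11 * g22 - g12 * g21"
  define a' where "a' = (a * g22 - b * g21) / dd"
  define b' where "b' = (b * g11 - a * g12) / dd"
  have "\<And>m. v m = (if m < n then a' * fst (X m) + b' * snd (X m) else 0)"
  proof -
    fix m
    show "v m = (if m < n then a' * fst (X m) + b' * snd (X m) else 0)"
    proof (cases "m < n")
      case True
      have dd0: "dd \<noteq> 0" using det by (simp add: dd_def)
      have "a' * g11 + b' * g21 = ((a * g22 - b * g21) * g11 + (b * g11 - a * g12) * g21) / dd"
        by (simp add: a'_def b'_def add_divide_distrib)
      also have "... = a * dd / dd" by (simp add: dd_def algebra_simps)
      finally have c1: "a' * g11 + b' * g21 = a" using dd0 by simp
      have "a' * g12 + b' * g22 = ((a * g22 - b * g21) * g12 + (b * g11 - a * g12) * g22) / dd"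
        by (simp add: a'_def b'_def add_divide_distrib)
      also have "... = b * dd / dd" by (simp add: dd_def algebra_simps)
      finally have c2: "a' * g12 + b' * g22 = b" using dd0 by simp
      have "a' * fst (X m) + b' * snd (X m) = (a' * g11 + b' * g21) * fst (C m) + (a' * g12 + b' * g22) * snd (C m)"
        unfolding hx[OF True] hy[OF True] by (simp add: algebra_simps)
      then have "a' * fst (X m) + b' * snd (X m) = a * fst (C m) + b * snd (C m)" unfolding c1 c2 .
      then show ?thesis using v True by simp
    qed (simp add: v)
  qed
  then show "v \<in> rowspan n X" unfolding rowspan_def by blast
qed

definition sgnb :: "nat \<Rightarrow> nat \<Rightarrow> real" where
  "sgnb n a = (if even (a div n) then 1 else -1)"
definition xw :: "nat \<Rightarrow> (nat \<Rightarrow> real \<times> real) \<Rightarrow> nat \<Rightarrow> real" where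
  "xw n X a = sgnb n a * fst (X (a mod n))"
definition yw :: "nat \<Rightarrow> (nat \<Rightarrow> real \<times> real) \<Rightarrow> nat \<Rightarrow> real" where
  "yw n X a = sgnb n a * snd (X (a mod n))"

lemma sgnb_n: "0 < n \<Longrightarrow> sgnb n (a + n) = - sgnb n a"
  by (simp add: sgnb_def)
lemma xw_anti: "0 < n \<Longrightarrow> xw n X (a + n) = - xw n X a"
  by (simp add: xw_def sgnb_n)
lemma yw_anti: "0 < n \<Longrightarrow> yw n X (a + n) = - yw n X a"
  by (simp add: yw_def sgnb_n)
lemma xw_small: "a < n \<Longrightarrow> xw n X a = fst (X a)" by (simp add: xw_def sgnb_def)
lemma yw_small: "a < n \<Longrightarrow> yw n X a = snd (X a)" by (simp add: yw_def sgnb_def)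

lemma walk_val:
  assumes ab: "a < b" "b < a + n"
  shows "\<exists>i j. i < j \<and> j < n \<and> xw n X a * yw n X b - yw n X a * xw n X b = minor X i j"
proof -
  have n0: "0 < n" using ab by simp
  have e: "xw n X a * yw n X b - yw n X a * xw n X b = sgnb n a * sgnb n b * minor X (a mod n) (b mod n)"
    by (simp add: xw_def yw_def minor_def algebra_simps)
  have ml: "a mod n < n" "b mod n < n" using n0 by simp_all
  from blocks[OF ab] show ?thesis
  proof
    assume A: "b div n = a div n \<and> a mod n < b mod n"
    then have "sgnb n a * sgnb n b = 1" by (simp add: sgnb_def)
    then show ?thesis using e A ml by auto
  next
    assume A: "b div n = Suc (a div n) \<and> b mod n < a mod n"
    then have "sgnb n a * sgnb n b = -1" by (simp add: sgnb_def)
    moreover have "minor X (a mod n) (b mod n) = - minor X (b mod n) (a mod n)" by (simp add: minor_def)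
    ultimately have "xw n X a * yw n X b - yw n X a * xw n X b = minor X (b mod n) (a mod n)" using e by simp
    moreover have "b mod n < a mod n" "a mod n < n" using A n0 by auto
    ultimately show ?thesis by blast
  qed
qed


lemma ratio_ge:
  assumes odd: "odd n" and n3: "3 \<le> n" and tX: "totally_positive n X"
    and ne: "rowspan n X \<noteq> rowspan n (cyclic n)"
  shows "ratio n (cyclic n) < ratio n X"
proof -
  have n0: "0 < n" using n3 by simp
  define k where "k = n div 2"
  have nk: "n = 2*k+1" using odd by (simp add: k_def)
  have k1: "1 \<le> k" using n3 nk by simp
  have pos: "0 < xw n X a * yw n X b - yw n X a * xw n X b" if ab: "a < b" "b < a + n" for a b
  proof -
    obtain i j where "i < j" "j < n" "xw n X a * yw n X b - yw n X a * xw n X b = minor X i j"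
      using walk_val[OF ab, of X] by blast
    then show ?thesis using tX unfolding totally_positive_def by simp
  qed
  interpret W: owalk n "xw n X" "yw n X" k
  proof unfold_locales
    show "3 \<le> n" by (rule n3)
    show "xw n X (a + n) = - xw n X a" for a using n0 by (rule xw_anti)
    show "yw n X (a + n) = - yw n X a" for a using n0 by (rule yw_anti)
    show "0 < xw n X a * yw n X b - yw n X a * xw n X b" if "a < b" "b < a + n" for a b
      using pos that by blast
    show "n = 2 * k + 1" by (rule nk)
    show "1 \<le> k" by (rule k1)
  qed
  have memb: "W.dt a b \<in> minors_set n X" if ab: "a < b" "b < a + n" for a b
  proof -
    obtain i j where "i < j" "j < n" "xw n X a * yw n X b - yw n X a * xw n X b = minor X i j"
      using walk_val[OF ab, of X] by blast
    then show ?thesis unfolding W.dt_def minors_set_def by blast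
  qed
  define m where "m = Min (W.sg ` {..<n})"
  define M where "M = Max (W.L ` {..<n})"
  have fin1: "finite (W.sg ` {..<n})" and ne1: "W.sg ` {..<n} \<noteq> {}" using n0 by auto
  have fin2: "finite (W.L ` {..<n})" and ne2: "W.L ` {..<n} \<noteq> {}" using n0 by auto
  obtain a0 where a0: "a0 < n" "m = W.sg a0" using Min_in[OF fin1 ne1] unfolding m_def by blast
  obtain a1 where a1: "a1 < n" "M = W.L a1" using Max_in[OF fin2 ne2] unfolding M_def by blast
  have m0: "0 < m" using a0 W.sg_pos by simp
  have hm: "m \<le> W.sg a" for a
  proof -
    have "W.sg a = W.sg (a mod n)" by (rule per_mod) (rule W.sg_per)
    moreover have "m \<le> W.sg (a mod n)" unfolding m_def using fin1 n0 by (intro Min_le) auto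
    ultimately show ?thesis by simp
  qed
  have hM: "W.L a \<le> M" for a
  proof -
    have "W.L a = W.L (a mod n)" by (rule per_mod) (rule W.L_per)
    moreover have "W.L (a mod n) \<le> M" unfolding M_def using fin2 n0 by (intro Max_ge) auto
    ultimately show ?thesis by simp
  qed
  have mms: "m \<in> minors_set n X" unfolding a0(2) W.sg_def using n3 by (intro memb) auto
  have Mms: "M \<in> minors_set n X" unfolding a1(2) W.L_def using nk k1 by (intro memb) auto
  have Minle: "Min (minors_set n X) \<le> m" using ms_finite mms by (rule Min_le)
  have Maxge: "M \<le> Max (minors_set n X)" using ms_finite Mms by (rule Max_ge)
  have Minpos: "0 < Min (minors_set n X)"
    using Min_in[OF ms_finite, of n X] mms ms_pos[OF tX] by blast
  have M0: "0 < M" using a1 W.L_pos by simp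
  have rX: "M / m \<le> ratio n X" unfolding ratio_def
    using Maxge M0 Minpos Minle by (intro frac_le) auto
  have ci: "m^2 \<le> (2 - 2 * cos (pi / n)) * M^2" by (rule W.core_ineq[OF m0 hm hM])
  define s where "s = sin (pi / (2 * n))"
  define c where "c = cos (pi / (2 * n))"
  have np: "0 < real n" using n0 by simp
  have x0: "0 < pi / (2 * n)" using np by simp
  have x1: "pi / (2 * n) < pi / 2" using n3 by (simp add: divide_less_eq)
  have s0: "0 < s" unfolding s_def using x0 x1 by (intro sin_gt_zero) auto
  have c0: "0 < c" unfolding c_def using x0 x1 by (intro cos_gt_zero) auto
  have dbl: "pi / n = 2 * (pi / (2 * n))" by simp
  have cosn: "cos (pi / n) = 1 - 2 * s^2"
  proof -
    have "cos (pi / n) = c^2 - s^2" unfolding dbl c_def s_def by (rule cos_double)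
    moreover have "s^2 + c^2 = 1" unfolding s_def c_def by simp
    ultimately show ?thesis by simp
  qed
  have sinn: "sin (pi / n) = 2 * s * c" unfolding dbl s_def c_def by (rule sin_double)
  have fin3: "finite (minors_set n (cyclic n))" by (rule ms_finite)
  have ne3: "minors_set n (cyclic n) \<noteq> {}" using n3 by (intro ms_ne) simp
  have maxC: "Max (minors_set n (cyclic n)) \<le> c"
  proof (subst Max_le_iff[OF fin3 ne3], intro ballI)
    fix t assume "t \<in> minors_set n (cyclic n)"
    then obtain i j where ij: "t = minor (cyclic n) i j" "i < j" "j < n" unfolding minors_set_def by blast
    then show "t \<le> c" unfolding c_def ij(1) minor_cyc[OF less_imp_le[OF ij(2)]]
      using cyc_bounds(1)[OF odd, of "j - i"] by simp
  qed
  have minC: "sin (pi / n) \<le> Min (minors_set n (cyclic n))"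
  proof (subst Min_ge_iff[OF fin3 ne3], intro ballI)
    fix t assume "t \<in> minors_set n (cyclic n)"
    then obtain i j where ij: "t = minor (cyclic n) i j" "i < j" "j < n" unfolding minors_set_def by blast
    then show "sin (pi / n) \<le> t" unfolding ij(1) minor_cyc[OF less_imp_le[OF ij(2)]]
      using cyc_bounds(2)[OF odd, of "j - i"] by simp
  qed
  have sp: "0 < sin (pi / n)" unfolding sinn using s0 c0 by simp
  have "ratio n (cyclic n) \<le> c / sin (pi / n)" unfolding ratio_def
    using maxC c0 sp minC by (intro frac_le) auto
  also have "... = 1 / (2 * s)" unfolding sinn using c0 by simp
  finally have rC: "ratio n (cyclic n) \<le> 1 / (2 * s)" .
  have ci2: "m^2 \<le> (2 * s * M)^2" using ci unfolding cosn by (simp add: power_mult_distrib)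
  have "0 \<le> 2 * s * M" using s0 M0 by simp
  with ci2 have mle: "m \<le> 2 * s * M" by (rule power2_le_imp_le)
  show ?thesis
  proof (rule ccontr)
    assume "\<not> ratio n (cyclic n) < ratio n X"
    then have "M / m \<le> 1 / (2 * s)" using rX rC by linarith
    then have "2 * s * M \<le> m" using m0 s0 by (simp add: field_simps)
    then have meq: "m = 2 * s * M" using mle by simp
    have eq: "m^2 = (2 - 2 * cos (pi / n)) * M^2" unfolding cosn meq by (simp add: power_mult_distrib)
    obtain g11 g12 g21 g22 where G: "0 < g11 * g22 - g12 * g21"
      "\<And>a. xw n X a = g11 * cos (real a * pi / n) + g12 * sin (real a * pi / n) \<and>
          yw n X a = g21 * cos (real a * pi / n) + g22 * sin (real a * pi / n)"
      using W.core_form[OF m0 hm hM eq] by blast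
    have "rowspan n X = rowspan n (cyclic n)"
    proof (rule rowspan_eq)
      show "fst (X a) = g11 * fst (cyclic n a) + g12 * snd (cyclic n a)" if "a < n" for a
        using G(2)[of a] xw_small[OF that, of X] by (simp add: cyclic_def)
      show "snd (X a) = g21 * fst (cyclic n a) + g22 * snd (cyclic n a)" if "a < n" for a
        using G(2)[of a] yw_small[OF that, of X] by (simp add: cyclic_def)
      show "g11 * g22 - g12 * g21 \<noteq> 0" using G(1) by simp
    qed
    then show False using ne by simp
  qed
qed

theorem mainTheorem3:
  fixes n :: nat
  assumes "odd n" and "n \<ge> 3"
  shows "rowspan n (cyclic n) \<in> Gr_pos n \<and>
         (\<forall>V \<in> Gr_pos n. V \<noteq> rowspan n (cyclic n) \<longrightarrow> E n (rowspan n (cyclic n)) < E n V)"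
proof -
  have n2: "2 \<le> n" using assms by simp
  have tC: "totally_positive n (cyclic n)" by (rule tp_cyclic)
  have mem: "rowspan n (cyclic n) \<in> Gr_pos n" unfolding Gr_pos_def using tC by blast
  have "\<forall>V\<in>Gr_pos n. V \<noteq> rowspan n (cyclic n) \<longrightarrow> E n (rowspan n (cyclic n)) < E n V"
  proof (intro ballI impI)
    fix V assume V: "V \<in> Gr_pos n" "V \<noteq> rowspan n (cyclic n)"
    then obtain X where X: "rowspan n X = V" "totally_positive n X" unfolding Gr_pos_def by blast
    have "E n V = ratio n X" using E_ratio[OF n2 X(2)] X(1) by simp
    moreover have "E n (rowspan n (cyclic n)) = ratio n (cyclic n)" using E_ratio[OF n2 tC] .
    moreover have "ratio n (cyclic n) < ratio n X" using ratio_ge[OF assms X(2)] V X by simp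
    ultimately show "E n (rowspan n (cyclic n)) < E n V" by simp
  qed
  with mem show ?thesis by blast
qed

end
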